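(* Assume $\mathrm{cost}(\cdot,\cdot)$ is $\beta$-smooth, let $\eta^{\mathrm{shift}}\in[0,1)$ and let $t_\lambda\ge0$ be arbitrary. Let $\hat S$, with speeds $\hat s_j$, be an optimal schedule for $\hat{\mathcal{J}}^{\mathrm{up}}$, and let $S^{\mathrm{shift}}$ be the schedule for $\mathcal{J}^{\mathrm{shift}}_{\ge t_\lambda}$ which, for all $t\ge t_\lambda$ and every $(j,r_j,p_j,v_j)\in\mathcal{J}^{\mathrm{shift}}_{\ge t_\lambda}$, processes $j$ at speed $s_j(t)=\hat s_j(t-\bar\eta)$ (the job of $\hat{\mathcal{J}}^{\mathrm{up}}$ with the same identifier). Then $$\mathrm{cost}(S^{\mathrm{shift}},\mathcal{J}^{\mathrm{shift}}_{\ge t_\lambda})\le\big(1+2\eta^{\mathrm{shift}}(1+\eta^{\mathrm{shift}})\big)\mathtt{OPT}(\hat{\mathcal{J}}).$$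
   Context: Jobs are tuples $(j,r_j,p_j,v_j)$ (identifier, release time, processing time, weight $v_j>0$). A feasible schedule assigns speeds $s_j(t)\ge0$ (zero before $r_j$); energy $E(S)=\int(\sum_js_j(t))^\alpha dt$, $\alpha>1$; work profile $w^S_j(t)=p_j-\int_{r_j}^ts_j$; the quality cost $F(S,\mathcal{J})$ depends only on work profiles and parameters of jobs in $\mathcal{J}$ and is subadditive and monotone (pointwise smaller work profiles give smaller $F$); $\mathrm{cost}=E+F$; $\mathtt{OPT}$ is the optimal cost. $\mathcal{J}_{\ge t}$ = jobs with (true) release time $\ge t$. Smoothness: a function $\beta$ from job sets to $\mathbb{R}$ is smooth if $\beta(\mathcal{J}')\le(1+\max_j\eta_j)\beta(\mathcal{J})$ whenever $\mathcal{J}'=\{(j,r'_j,p_j(1+\eta_j),v_j(1+\eta_j))\}$ with $r'_j,\eta_j\ge0$, and monotone if $\beta(\mathcal{J}'')\le\beta(\mathcal{J})$ for $\mathcal{J}''\subseteq\mathcal{J}$. The cost is $\beta$-smooth if $\beta\ge1$ is smooth and monotone and for all $\eta,\eta'\in[0,1]$, $\mathcal{J}_1,\mathcal{J}_2$ with a bijection $\pi:\mathcal{J}_1\to\mathcal{J}_2$, and feasible $S_1,S_2$: (i) if $|r_j-r_{\pi(j)}|\le\eta'$, $p_j\le p_{\pi(j)}(1+\eta)$, $v_j\le v_{\pi(j)}(1+\eta)$ for all $j$, then $\mathtt{OPT}(\mathcal{J}_1)\le(1+\beta(\mathcal{J}_1)\eta)\mathtt{OPT}(\mathcal{J}_2)+\beta(\mathcal{J}_1)|\mathcal{J}_1|\eta'$;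 (ii) if $p_j\le p_{\pi(j)}$, $v_j\le v_{\pi(j)}$, $r_j\ge r_{\pi(j)}-\eta'$, and $w^{S_1}_j(t)\le w^{S_2}_{\pi(j)}(t-\eta')$ for all $t\ge r_{\pi(j)}+\eta'$, for all $j$, then $F(S_1,\mathcal{J}_1)\le F(S_2,\mathcal{J}_2)+\beta(\mathcal{J}_1)|\mathcal{J}_1|\eta'$. Shifted predictions: true jobs $\mathcal{J}$ and predicted jobs $\hat{\mathcal{J}}=\{(j,\hat r_j,\hat p_j,\hat v_j)\}$ (nonempty, $\mathtt{OPT}(\hat{\mathcal{J}})>0$); a true job is matched with the predicted job of the same identifier if any. Let $\bar\eta=\frac{\eta^{\mathrm{shift}}}{\beta(\hat{\mathcal{J}})}\cdot\frac{\mathtt{OPT}(\hat{\mathcal{J}})}{|\hat{\mathcal{J}}|}$. $\mathcal{J}^{\mathrm{shift}}$ is the set of true jobs $(j,r_j,p_j,v_j)$ having a predicted counterpart with $|r_j-\hat r_j|\le\bar\eta$, $|p_j-\hat p_j|\le\frac{\eta^{\mathrm{shift}}}{\beta(\hat{\mathcal{J}})}\hat p_j$ and $|v_j-\hat v_j|\le\frac{\eta^{\mathrm{shift}}}{\beta(\hat{\mathcal{J}})}\hat v_j$. $\hat{\mathcal{J}}^{\mathrm{up}}=\{(j,\hat r_j,\hat p_j(1+\frac{\eta^{\mathrm{shift}}}{\beta(\hat{\mathcal{J}})}),\hat v_j(1+\frac{\eta^{\mathrm{shift}}}{\beta(\hat{\mathcal{J}})})):(j,\hat r_j,\hat p_j,\hat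 v_j)\in\hat{\mathcal{J}}\}$.
   Formalization: The quality cost F is also monotone under inclusion of job sets: $F(S,\mathcal{J}')\le F(S,\mathcal{J})$ for every feasible schedule S of $\mathcal{J}$ and every $\mathcal{J}'\subseteq\mathcal{J}$. The statement above fails without it. *)

theory Defs
  imports "HOL-Analysis.Analysis"
begin

text \<open>A job is a tuple (identifier, release time, processing time, weight).
  A job set is a set of such tuples; a schedule assigns to every identifier a speed function.\<close>

type_synonym 'i job = "'i \<times> real \<times> real \<times> real"
type_synonym 'i schedule = "'i \<Rightarrow> real \<Rightarrow> real"

definition jid :: "'i job \<Rightarrow> 'i" where "jid x = fst x"
definition rel :: "'i job \<Rightarrow> real" where "rel x = fst (snd x)"
definition proc :: "'i job \<Rightarrow> real" where "proc x = fst (snd (snd x))"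
definition wt :: "'i job \<Rightarrow> real" where "wt x = snd (snd (snd x))"

definition valid_jobs :: "'i job set \<Rightarrow> bool" where
  "valid_jobs J \<longleftrightarrow> finite J \<and> inj_on jid J \<and>
     (\<forall>x\<in>J. rel x \<ge> 0 \<and> proc x > 0 \<and> wt x > 0)"

definition energy :: "real \<Rightarrow> 'i schedule \<Rightarrow> 'i job set \<Rightarrow> real" where
  "energy \<alpha> S J = (\<integral>t. (\<Sum>x\<in>J. S (jid x) t) powr \<alpha> \<partial>lborel)"

definition work :: "'i schedule \<Rightarrow> 'i job \<Rightarrow> real \<Rightarrow> real" where
  "work S x t = proc x - (LBINT u=rel x..t. S (jid x) u)"

definition feasible :: "real \<Rightarrow> 'i job set \<Rightarrow> 'i schedule \<Rightarrow> bool" where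
  "feasible \<alpha> J S \<longleftrightarrow>
     (\<forall>x\<in>J. (\<forall>t. S (jid x) t \<ge> 0) \<and> (\<forall>t. t < rel x \<longrightarrow> S (jid x) t = 0) \<and>
            S (jid x) \<in> borel_measurable lborel \<and>
            (\<forall>a b. set_integrable lborel {a..b} (S (jid x)))) \<and>
     integrable lborel (\<lambda>t. (\<Sum>x\<in>J. S (jid x) t) powr \<alpha>)"

definition cost :: "real \<Rightarrow> ('i schedule \<Rightarrow> 'i job set \<Rightarrow> real) \<Rightarrow> 'i schedule \<Rightarrow> 'i job set \<Rightarrow> real" where
  "cost \<alpha> F S J = energy \<alpha> S J + F S J"

definition OPT :: "real \<Rightarrow> ('i schedule \<Rightarrow> 'i job set \<Rightarrow> real) \<Rightarrow> 'i job set \<Rightarrow> real" where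
  "OPT \<alpha> F J = Inf {cost \<alpha> F S J | S. feasible \<alpha> J S}"

definition quality_cost :: "real \<Rightarrow> ('i schedule \<Rightarrow> 'i job set \<Rightarrow> real) \<Rightarrow> bool" where
  "quality_cost \<alpha> F \<longleftrightarrow>
     \<comment> \<open>depends only on work profiles and parameters of the jobs in J\<close>
     (\<forall>J S1 S2. valid_jobs J \<longrightarrow> feasible \<alpha> J S1 \<longrightarrow> feasible \<alpha> J S2 \<longrightarrow>
        (\<forall>x\<in>J. \<forall>t. work S1 x t = work S2 x t) \<longrightarrow> F S1 J = F S2 J) \<and>
     \<comment> \<open>subadditive\<close>
     (\<forall>A B S. valid_jobs (A \<union> B) \<longrightarrow> A \<inter> B = {} \<longrightarrow> feasible \<alpha> (A \<union> B) S \<longrightarrow>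
        F S (A \<union> B) \<le> F S A + F S B) \<and>
     \<comment> \<open>monotone in the work profiles\<close>
     (\<forall>J S1 S2. valid_jobs J \<longrightarrow> feasible \<alpha> J S1 \<longrightarrow> feasible \<alpha> J S2 \<longrightarrow>
        (\<forall>x\<in>J. \<forall>t. work S1 x t \<le> work S2 x t) \<longrightarrow> F S1 J \<le> F S2 J) \<and>
     \<comment> \<open>monotone in the job set (see NOTES.md)\<close>
     (\<forall>J J' S. valid_jobs J \<longrightarrow> J' \<subseteq> J \<longrightarrow> feasible \<alpha> J S \<longrightarrow> F S J' \<le> F S J)"

definition perturb :: "('i \<Rightarrow> real) \<Rightarrow> ('i \<Rightarrow> real) \<Rightarrow> 'i job set \<Rightarrow> 'i job set" where
  "perturb r' \<eta> J = (\<lambda>x. (jid x, r' (jid x), proc x * (1 + \<eta> (jid x)), wt x * (1 + \<eta> (jid x)))) ` J"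

definition smooth_fun :: "('i job set \<Rightarrow> real) \<Rightarrow> bool" where
  "smooth_fun \<beta> \<longleftrightarrow>
     (\<forall>J r' \<eta>. valid_jobs J \<longrightarrow> J \<noteq> {} \<longrightarrow> (\<forall>x\<in>J. r' (jid x) \<ge> 0 \<and> \<eta> (jid x) \<ge> 0) \<longrightarrow>
        \<beta> (perturb r' \<eta> J) \<le> (1 + Max ((\<lambda>x. \<eta> (jid x)) ` J)) * \<beta> J)"

definition monotone_fun :: "('i job set \<Rightarrow> real) \<Rightarrow> bool" where
  "monotone_fun \<beta> \<longleftrightarrow> (\<forall>J J''. valid_jobs J \<longrightarrow> J'' \<subseteq> J \<longrightarrow> \<beta> J'' \<le> \<beta> J)"

definition beta_smooth :: "real \<Rightarrow> ('i schedule \<Rightarrow> 'i job set \<Rightarrow> real) \<Rightarrow> ('i job set \<Rightarrow> real) \<Rightarrow> bool" where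
  "beta_smooth \<alpha> F \<beta> \<longleftrightarrow>
     (\<forall>J. valid_jobs J \<longrightarrow> \<beta> J \<ge> 1) \<and> smooth_fun \<beta> \<and> monotone_fun \<beta> \<and>
     (\<forall>\<eta> \<eta>' J1 J2 \<pi>. 0 \<le> \<eta> \<longrightarrow> \<eta> \<le> 1 \<longrightarrow> 0 \<le> \<eta>' \<longrightarrow> \<eta>' \<le> 1 \<longrightarrow>
        valid_jobs J1 \<longrightarrow> valid_jobs J2 \<longrightarrow> bij_betw \<pi> J1 J2 \<longrightarrow>
        ((\<forall>x\<in>J1. \<bar>rel x - rel (\<pi> x)\<bar> \<le> \<eta>' \<and> proc x \<le> proc (\<pi> x) * (1 + \<eta>) \<and>
                  wt x \<le> wt (\<pi> x) * (1 + \<eta>)) \<longrightarrow>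
          OPT \<alpha> F J1 \<le> (1 + \<beta> J1 * \<eta>) * OPT \<alpha> F J2 + \<beta> J1 * real (card J1) * \<eta>') \<and>
        (\<forall>S1 S2. feasible \<alpha> J1 S1 \<longrightarrow> feasible \<alpha> J2 S2 \<longrightarrow>
          (\<forall>x\<in>J1. proc x \<le> proc (\<pi> x) \<and> wt x \<le> wt (\<pi> x) \<and> rel x \<ge> rel (\<pi> x) - \<eta>' \<and>
                  (\<forall>t. t \<ge> rel (\<pi> x) + \<eta>' \<longrightarrow> work S1 x t \<le> work S2 (\<pi> x) (t - \<eta>'))) \<longrightarrow>
          F S1 J1 \<le> F S2 J2 + \<beta> J1 * real (card J1) * \<eta>'))"

definition released_from :: "real \<Rightarrow> 'i job set \<Rightarrow> 'i job set" where
  "released_from t J = {x \<in> J. rel x \<ge> t}"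

definition eta_bar :: "real \<Rightarrow> ('i schedule \<Rightarrow> 'i job set \<Rightarrow> real) \<Rightarrow> ('i job set \<Rightarrow> real) \<Rightarrow> real \<Rightarrow> 'i job set \<Rightarrow> real" where
  "eta_bar \<alpha> F \<beta> \<eta>s Jh = \<eta>s / \<beta> Jh * (OPT \<alpha> F Jh / real (card Jh))"

definition J_shift :: "real \<Rightarrow> ('i schedule \<Rightarrow> 'i job set \<Rightarrow> real) \<Rightarrow> ('i job set \<Rightarrow> real) \<Rightarrow> real \<Rightarrow> 'i job set \<Rightarrow> 'i job set \<Rightarrow> 'i job set" where
  "J_shift \<alpha> F \<beta> \<eta>s J Jh = {x \<in> J. \<exists>y\<in>Jh. jid y = jid x \<and>
      \<bar>rel x - rel y\<bar> \<le> eta_bar \<alpha> F \<beta> \<eta>s Jh \<and>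
      \<bar>proc x - proc y\<bar> \<le> \<eta>s / \<beta> Jh * proc y \<and>
      \<bar>wt x - wt y\<bar> \<le> \<eta>s / \<beta> Jh * wt y}"

definition J_up :: "('i job set \<Rightarrow> real) \<Rightarrow> real \<Rightarrow> 'i job set \<Rightarrow> 'i job set" where
  "J_up \<beta> \<eta>s Jh = (\<lambda>x. (jid x, rel x, proc x * (1 + \<eta>s / \<beta> Jh), wt x * (1 + \<eta>s / \<beta> Jh))) ` Jh"

end

theory Submission imports Defs begin

lemma lbint_shift:
  fixes f :: "real \<Rightarrow> real"
  shows "(LBINT u=ereal a..ereal b. f (u - s)) = (LBINT u=ereal (a - s)..ereal (b - s). f u)"
proof -
  have key: "(\<integral>x. indicator {c<..<d} x *\<^sub>R f (x - s) \<partial>lborel) =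
             (\<integral>x. indicator {c - s<..<d - s} x *\<^sub>R f x \<partial>lborel)" for c d :: real
  proof -
    have "(\<integral>x. indicator {c - s<..<d - s} x *\<^sub>R f x \<partial>lborel) =
          \<bar>1\<bar> *\<^sub>R (\<integral>x. indicator {c - s<..<d - s} (-s + 1 * x) *\<^sub>R f (-s + 1 * x) \<partial>lborel)"
      by (rule lborel_integral_real_affine) simp
    also have "\<dots> = (\<integral>x. indicator {c<..<d} x *\<^sub>R f (x - s) \<partial>lborel)"
      by (simp add: indicator_def algebra_simps)
    finally show ?thesis by simp
  qed
  show ?thesis
    unfolding interval_lebesgue_integral_def set_lebesgue_integral_def
    using key by simp
qed

lemma lbint_zero_below:
  fixes f :: "real \<Rightarrow> real"
  assumes z: "\<And>u. u < c \<Longrightarrow> f u = 0" and ac: "a \<le> c"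
  shows "(LBINT u=ereal a..ereal b. f u) = (LBINT u=ereal c..ereal b. f u)"
proof (cases "c \<le> b")
  case True
  have "(\<integral>x. indicator {a<..<b} x *\<^sub>R f x \<partial>lborel) = (\<integral>x. indicator {c<..<b} x *\<^sub>R f x \<partial>lborel)"
  proof (rule integral_discrete_difference[of "{c}"])
    fix x assume "x \<notin> {c}" then show "indicator {a<..<b} x *\<^sub>R f x = indicator {c<..<b} x *\<^sub>R f x"
      using z[of x] ac True by (auto simp: indicator_def)
  qed auto
  then show ?thesis using True ac
    unfolding interval_lebesgue_integral_def set_lebesgue_integral_def by simp
next
  case False
  have 1: "(\<integral>x. indicator {a<..<b} x *\<^sub>R f x \<partial>lborel) = 0"
    by (rule integral_eq_zero_AE) (use z False in \<open>auto simp: indicator_def\<close>)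
  have 2: "(\<integral>x. indicator {b<..<a} x *\<^sub>R f x \<partial>lborel) = 0"
    by (rule integral_eq_zero_AE) (use z False ac in \<open>auto simp: indicator_def\<close>)
  have 3: "(\<integral>x. indicator {b<..<c} x *\<^sub>R f x \<partial>lborel) = 0"
    by (rule integral_eq_zero_AE) (use z False in \<open>auto simp: indicator_def\<close>)
  show ?thesis using False 1 2 3
    unfolding interval_lebesgue_integral_def set_lebesgue_integral_def by simp
qed

lemma energy_bound:
  fixes S Sh :: "'i schedule"
  assumes feas: "feasible \<alpha> JU Sh" and vJU: "valid_jobs JU" and vK: "valid_jobs K"
    and ids: "jid ` K \<subseteq> jid ` JU" and \<alpha>: "\<alpha> > 1"
    and meas: "\<forall>x\<in>K. S (jid x) \<in> borel_measurable lborel"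
    and bnd: "\<forall>x\<in>K. \<forall>t. 0 \<le> S (jid x) t \<and> S (jid x) t \<le> Sh (jid x) (t - s)"
  shows "integrable lborel (\<lambda>t. (\<Sum>x\<in>K. S (jid x) t) powr \<alpha>)"
    and "energy \<alpha> S K \<le> energy \<alpha> Sh JU"
proof -
  have fJU: "finite JU" "inj_on jid JU" and fK: "finite K" "inj_on jid K"
    using vJU vK by (auto simp: valid_jobs_def)
  have Shnn: "\<And>i t. i \<in> jid ` JU \<Longrightarrow> 0 \<le> Sh i t" using feas by (auto simp: feasible_def)
  define h where "h = (\<lambda>t. (\<Sum>y\<in>JU. Sh (jid y) t) powr \<alpha>)"
  have hint: "integrable lborel h" using feas by (simp add: feasible_def h_def)
  have gint: "integrable lborel (\<lambda>t. h (-s + 1 * t))"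
    by (rule lborel_integrable_real_affine[OF hint]) simp
  have hshift: "integral\<^sup>L lborel h = integral\<^sup>L lborel (\<lambda>t. h (-s + 1 * t))"
    using lborel_integral_real_affine[of 1 h "-s"] by simp
  have fm: "(\<lambda>t. (\<Sum>x\<in>K. S (jid x) t) powr \<alpha>) \<in> borel_measurable lborel"
  proof -
    have "(\<lambda>t. (\<Sum>x\<in>K. S (jid x) t)) \<in> borel_measurable lborel"
      by (rule borel_measurable_sum) (use meas in auto)
    then show ?thesis by measurable
  qed
  have pw: "0 \<le> (\<Sum>x\<in>K. S (jid x) t) powr \<alpha> \<and> (\<Sum>x\<in>K. S (jid x) t) powr \<alpha> \<le> h (-s + 1 * t)" for t
  proof -
    have a: "0 \<le> (\<Sum>x\<in>K. S (jid x) t)" using bnd by (auto intro: sum_nonneg)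
    have "(\<Sum>x\<in>K. S (jid x) t) \<le> (\<Sum>x\<in>K. Sh (jid x) (t - s))"
      using bnd by (auto intro: sum_mono)
    also have "\<dots> = (\<Sum>i\<in>jid ` K. Sh i (t - s))"
      using fK by (simp add: sum.reindex)
    also have "\<dots> \<le> (\<Sum>i\<in>jid ` JU. Sh i (t - s))"
      by (rule sum_mono2) (use fJU ids Shnn in auto)
    also have "\<dots> = (\<Sum>y\<in>JU. Sh (jid y) (t - s))"
      using fJU by (simp add: sum.reindex)
    finally have b: "(\<Sum>x\<in>K. S (jid x) t) \<le> (\<Sum>y\<in>JU. Sh (jid y) (t - s))" .
    show ?thesis using powr_mono2[of \<alpha>, OF _ a b] \<alpha> by (simp add: h_def)
  qed
  show int: "integrable lborel (\<lambda>t. (\<Sum>x\<in>K. S (jid x) t) powr \<alpha>)"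
    by (rule Bochner_Integration.integrable_bound[OF gint fm]) (use pw in \<open>auto intro!: AE_I2 intro: order_trans[OF _ abs_ge_self]\<close>)
  have "energy \<alpha> S K \<le> integral\<^sup>L lborel (\<lambda>t. h (-s + 1 * t))"
    unfolding energy_def by (rule integral_mono[OF int gint]) (use pw in auto)
  also have "\<dots> = energy \<alpha> Sh JU" using hshift by (simp add: energy_def h_def)
  finally show "energy \<alpha> S K \<le> energy \<alpha> Sh JU" .
qed

lemma shift_meas_b:
  fixes f :: "real \<Rightarrow> real"
  assumes fm: "f \<in> borel_measurable borel"
  shows "(\<lambda>t. f (t - c)) \<in> borel_measurable borel"
    and "(\<lambda>t. if d \<le> t then f (t - c) else 0) \<in> borel_measurable borel"
proof -
  have m: "(\<lambda>t::real. t - c) \<in> borel_measurable borel" by (intro borel_measurable_diff) auto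
  show 1: "(\<lambda>t. f (t - c)) \<in> borel_measurable borel" using measurable_compose[OF m fm] .
  have s: "{t \<in> space borel. d \<le> t} \<in> sets borel" by simp
  show "(\<lambda>t. if d \<le> t then f (t - c) else 0) \<in> borel_measurable borel"
    by (rule measurable_If[OF 1 _ s]) simp
qed

lemma feasible_from:
  fixes S Sh :: "'i schedule"
  assumes feas: "feasible \<alpha> JU Sh" and vJU: "valid_jobs JU" and vK: "valid_jobs K"
    and ids: "jid ` K \<subseteq> jid ` JU" and \<alpha>: "\<alpha> > 1"
    and meas: "\<forall>x\<in>K. S (jid x) \<in> borel_measurable lborel"
    and bnd: "\<forall>x\<in>K. \<forall>t. 0 \<le> S (jid x) t \<and> S (jid x) t \<le> Sh (jid x) (t - s)"
    and zero: "\<forall>x\<in>K. \<forall>t. t < rel x \<longrightarrow> S (jid x) t = 0"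
  shows "feasible \<alpha> K S"
proof -
  have si: "set_integrable lborel {a..b} (S (jid x))" if x: "x \<in> K" for x a b
  proof -
    obtain y where y: "y \<in> JU" "jid y = jid x" using ids x by force
    have "set_integrable lborel {a - s..b - s} (Sh (jid y))" using feas y by (auto simp: feasible_def)
    then have i1: "integrable lborel (\<lambda>t. indicator {a - s..b - s} t *\<^sub>R Sh (jid x) t)"
      using y by (simp add: set_integrable_def)
    have i2: "integrable lborel (\<lambda>t. (\<lambda>t. indicator {a - s..b - s} t *\<^sub>R Sh (jid x) t) (-s + 1 * t))"
      by (rule lborel_integrable_real_affine[OF i1]) simp
    have [measurable]: "S (jid x) \<in> borel_measurable borel" using meas x by (simp add: measurable_lborel1)
    have m: "(\<lambda>t. indicator {a..b} t *\<^sub>R S (jid x) t) \<in> borel_measurable lborel"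
      by measurable
    show ?thesis unfolding set_integrable_def
      by (rule Bochner_Integration.integrable_bound[OF i2 m])
         (use bnd x in \<open>auto intro!: AE_I2 simp: indicator_def intro: order_trans[OF _ abs_ge_self]\<close>)
  qed
  have "\<forall>x\<in>K. (\<forall>t. S (jid x) t \<ge> 0) \<and> (\<forall>t. t < rel x \<longrightarrow> S (jid x) t = 0) \<and>
            S (jid x) \<in> borel_measurable lborel \<and>
            (\<forall>a b. set_integrable lborel {a..b} (S (jid x)))"
    using bnd zero meas si by blast
  then show ?thesis unfolding feasible_def
    using energy_bound(1)[OF feas vJU vK ids \<alpha> meas bnd] by (intro conjI)
qed


lemma tup_simps[simp]:
  "jid (a, b, c, d) = a" "rel (a, b, c, d) = b" "proc (a, b, c, d) = c" "wt (a, b, c, d) = d"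
  by (simp_all add: jid_def rel_def proc_def wt_def)

theorem lemma7:
  fixes \<alpha> :: real and F :: "'i schedule \<Rightarrow> 'i job set \<Rightarrow> real" and \<beta> :: "'i job set \<Rightarrow> real"
    and J Jh :: "'i job set" and \<eta>s tlam :: real and Sh :: "'i schedule"
  assumes "\<alpha> > 1"
    and "quality_cost \<alpha> F"
    and "beta_smooth \<alpha> F \<beta>"
    and "valid_jobs J" and "valid_jobs Jh" and "Jh \<noteq> {}" and "OPT \<alpha> F Jh > 0"
    and "0 \<le> \<eta>s" and "\<eta>s < 1" and "0 \<le> tlam"
    and "feasible \<alpha> (J_up \<beta> \<eta>s Jh) Sh"
    and "cost \<alpha> F Sh (J_up \<beta> \<eta>s Jh) = OPT \<alpha> F (J_up \<beta> \<eta>s Jh)"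
  shows "cost \<alpha> F (\<lambda>j t. if t \<ge> tlam then Sh j (t - eta_bar \<alpha> F \<beta> \<eta>s Jh) else 0)
             (released_from tlam (J_shift \<alpha> F \<beta> \<eta>s J Jh))
         \<le> (1 + 2 * \<eta>s * (1 + \<eta>s)) * OPT \<alpha> F Jh"
proof -
  note a = assms
  define eb where "eb = eta_bar \<alpha> F \<beta> \<eta>s Jh"
  define eta where "eta = \<eta>s / \<beta> Jh"
  define JU where "JU = J_up \<beta> \<eta>s Jh"
  define Js where "Js = released_from tlam (J_shift \<alpha> F \<beta> \<eta>s J Jh)"
  define S where "S = (\<lambda>j t. if t \<ge> tlam then Sh j (t - eb) else (0::real))"
  define I where "I = jid ` Js"
  define up where "up = (\<lambda>x::'i job. (jid x, rel x, proc x * (1 + eta), wt x * (1 + eta)))"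
  have JU_eq: "JU = up ` Jh" by (simp add: JU_def J_up_def up_def eta_def)
  have feasU: "feasible \<alpha> JU Sh" using a(11) by (simp add: JU_def)
  have costU: "cost \<alpha> F Sh JU = OPT \<alpha> F JU" using a(12) by (simp add: JU_def)
  note bsd = a(3)[unfolded beta_smooth_def]
  have bge1: "\<And>K. valid_jobs K \<Longrightarrow> \<beta> K \<ge> 1" using bsd[THEN conjunct1] by blast
  have smooth: "smooth_fun \<beta>" using bsd[THEN conjunct2, THEN conjunct1] .
  have mono: "monotone_fun \<beta>" using bsd[THEN conjunct2, THEN conjunct2, THEN conjunct1] .
  note bs = bsd[THEN conjunct2, THEN conjunct2, THEN conjunct2, rule_format]
  note qcd = a(2)[unfolded quality_cost_def]
  note q1 = qcd[THEN conjunct1, rule_format]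
  note q4 = qcd[THEN conjunct2, THEN conjunct2, THEN conjunct2, rule_format]
  have vJh: "finite Jh" "inj_on jid Jh" "\<And>x. x \<in> Jh \<Longrightarrow> rel x \<ge> 0 \<and> proc x > 0 \<and> wt x > 0"
    using a(5) by (auto simp: valid_jobs_def)
  have vJ: "finite J" "inj_on jid J" "\<And>x. x \<in> J \<Longrightarrow> rel x \<ge> 0 \<and> proc x > 0 \<and> wt x > 0"
    using a(4) by (auto simp: valid_jobs_def)
  have BJh: "\<beta> Jh \<ge> 1" using bge1 a(5) by blast
  have eta0: "0 \<le> eta" using BJh a(8) by (simp add: eta_def)
  have etas: "eta \<le> \<eta>s" unfolding eta_def using divide_left_mono[of 1 "\<beta> Jh" \<eta>s] BJh a(8) by simp
  have eta1: "eta < 1" using etas a(9) by linarith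
  have cJh: "card Jh > 0" using vJh(1) a(6) by (simp add: card_gt_0_iff)
  have eb_eq: "eb = eta * (OPT \<alpha> F Jh / real (card Jh))" by (simp add: eb_def eta_bar_def eta_def)
  have eb0: "eb \<ge> 0" using eta0 a(7) cJh by (simp add: eb_eq)

  have Js_sub: "Js \<subseteq> J" by (auto simp: Js_def released_from_def J_shift_def)
  have Js_prop: "rel x \<ge> tlam \<and> (\<exists>y\<in>Jh. jid y = jid x \<and> \<bar>rel x - rel y\<bar> \<le> eb \<and>
      \<bar>proc x - proc y\<bar> \<le> eta * proc y \<and> \<bar>wt x - wt y\<bar> \<le> eta * wt y)" if "x \<in> Js" for x
    using that by (auto simp: Js_def released_from_def J_shift_def eb_def eta_def)
  have vJs: "valid_jobs Js" using a(4) Js_sub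
    by (auto simp: valid_jobs_def intro: finite_subset inj_on_subset)
  define hj where "hj i = (THE y. y \<in> Jh \<and> jid y = i)" for i
  have hj: "hj (jid y) = y" if "y \<in> Jh" for y
    unfolding hj_def by (rule the_equality) (use that inj_onD[OF vJh(2)] in auto)
  define tj where "tj i = (THE x. x \<in> Js \<and> jid x = i)" for i
  have tj: "tj (jid x) = x" if "x \<in> Js" for x
    unfolding tj_def by (rule the_equality) (use that inj_onD[OF vJs[unfolded valid_jobs_def, THEN conjunct2, THEN conjunct1]] in auto)
  have Iprop: "tj i \<in> Js \<and> jid (tj i) = i \<and> hj i \<in> Jh \<and> jid (hj i) = i \<and>
      \<bar>rel (tj i) - rel (hj i)\<bar> \<le> eb \<and> \<bar>proc (tj i) - proc (hj i)\<bar> \<le> eta * proc (hj i) \<and>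
      \<bar>wt (tj i) - wt (hj i)\<bar> \<le> eta * wt (hj i)" if iI: "i \<in> I" for i
  proof -
    obtain x where x: "x \<in> Js" "i = jid x" using iI unfolding I_def by blast
    obtain y where y: "y \<in> Jh" "jid y = jid x" "\<bar>rel x - rel y\<bar> \<le> eb"
      "\<bar>proc x - proc y\<bar> \<le> eta * proc y" "\<bar>wt x - wt y\<bar> \<le> eta * wt y"
      using Js_prop[OF x(1)] by blast
    have "tj i = x" using tj x by simp
    moreover have "hj i = y" using hj[OF y(1)] y(2) x(2) by simp
    ultimately show ?thesis using x y by simp
  qed
  define rh where "rh i = rel (hj i)" for i
  define pu where "pu i = proc (hj i) * (1 + eta)" for i
  define vu where "vu i = wt (hj i) * (1 + eta)" for i
  define r where "r i = rel (tj i)" for i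
  define KS where "KS \<rho> = (\<lambda>i. (i, \<rho> i, pu i, vu i)) ` I" for \<rho> :: "'i \<Rightarrow> real"
  define T where "T c = (\<lambda>j t. Sh j (t - c))" for c :: real
  have finI: "finite I" using vJs by (simp add: I_def valid_jobs_def)
  have pos: "rh i \<ge> 0 \<and> pu i > 0 \<and> vu i > 0 \<and> r i \<ge> 0" if "i \<in> I" for i
  proof -
    have "hj i \<in> Jh" "tj i \<in> J" using Iprop[OF that] Js_sub by auto
    then show ?thesis using vJh(3)[of "hj i"] vJ(3)[of "tj i"] eta0
      by (simp add: rh_def pu_def vu_def r_def)
  qed
  have KS_jid: "jid ` KS \<rho> = I" for \<rho> by (simp add: KS_def image_image)
  have KS_inj: "inj_on jid (KS \<rho>)" for \<rho> by (auto simp: KS_def inj_on_def)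
  have KS_card: "card (KS \<rho>) = card I" for \<rho>
    unfolding KS_def by (rule card_image) (auto simp: inj_on_def)
  have KS_valid: "valid_jobs (KS \<rho>)" if "\<forall>i\<in>I. 0 \<le> \<rho> i" for \<rho>
    unfolding valid_jobs_def
  proof (intro conjI ballI)
    show "finite (KS \<rho>)" using finI by (simp add: KS_def)
    show "inj_on jid (KS \<rho>)" by (rule KS_inj)
    fix x assume "x \<in> KS \<rho>"
    then obtain i where "i \<in> I" "x = (i, \<rho> i, pu i, vu i)" by (auto simp: KS_def)
    then show "0 \<le> rel x" "0 < proc x" "0 < wt x" using that pos by auto
  qed
  have up_jid: "jid (up x) = jid x" for x by (simp add: up_def)
  have vJU: "valid_jobs JU"
    unfolding JU_eq valid_jobs_def
  proof (intro conjI ballI)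
    show "finite (up ` Jh)" using vJh(1) by simp
    show "inj_on jid (up ` Jh)"
    proof (rule inj_onI)
      fix x y assume "x \<in> up ` Jh" "y \<in> up ` Jh" "jid x = jid y"
      then obtain x' y' where "x' \<in> Jh" "y' \<in> Jh" "x = up x'" "y = up y'" "jid x' = jid y'"
        by (auto simp: up_jid)
      then show "x = y" using inj_onD[OF vJh(2)] by metis
    qed
    fix x assume "x \<in> up ` Jh"
    then show "0 \<le> rel x" "0 < proc x" "0 < wt x" using vJh(3) eta0 by (auto simp: up_def)
  qed
  have KSrh_sub: "KS rh \<subseteq> JU"
  proof
    fix x assume "x \<in> KS rh"
    then obtain i where i: "i \<in> I" "x = (i, rh i, pu i, vu i)" by (auto simp: KS_def)
    have "x = up (hj i)" using i Iprop[OF i(1)] by (simp add: up_def rh_def pu_def vu_def)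
    then show "x \<in> JU" using Iprop[OF i(1)] JU_eq by simp
  qed
  have I_sub: "I \<subseteq> jid ` JU" using KSrh_sub KS_jid[of rh] by blast
  have Shi: "(\<forall>t. 0 \<le> Sh i t) \<and> (\<forall>t. t < rh i \<longrightarrow> Sh i t = 0) \<and> Sh i \<in> borel_measurable lborel"
    if "i \<in> I" for i
  proof -
    have "(i, rh i, pu i, vu i) \<in> JU" using KSrh_sub that by (auto simp: KS_def)
    then have "(\<forall>t. Sh (jid (i, rh i, pu i, vu i)) t \<ge> 0) \<and>
        (\<forall>t. t < rel (i, rh i, pu i, vu i) \<longrightarrow> Sh (jid (i, rh i, pu i, vu i)) t = 0) \<and>
        Sh (jid (i, rh i, pu i, vu i)) \<in> borel_measurable lborel"
      using feasU unfolding feasible_def by blast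
    then show ?thesis by simp
  qed
  have feasT: "feasible \<alpha> (KS \<rho>) (T c)" if "\<forall>i\<in>I. 0 \<le> \<rho> i \<and> \<rho> i \<le> rh i + c" for \<rho> c
  proof (rule feasible_from[OF feasU vJU KS_valid _ a(1), where s = c])
    show "\<forall>i\<in>I. 0 \<le> \<rho> i" using that by blast
    show "jid ` KS \<rho> \<subseteq> jid ` JU" using I_sub KS_jid by simp
    show "\<forall>x\<in>KS \<rho>. T c (jid x) \<in> borel_measurable lborel"
      using Shi by (auto simp: KS_def T_def intro: shift_meas_b(1))
    show "\<forall>x\<in>KS \<rho>. \<forall>t. 0 \<le> T c (jid x) t \<and> T c (jid x) t \<le> Sh (jid x) (t - c)"
      using Shi by (auto simp: KS_def T_def)
    show "\<forall>x\<in>KS \<rho>. \<forall>t. t < rel x \<longrightarrow> T c (jid x) t = 0"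
    proof (intro ballI allI impI)
      fix x t assume x: "x \<in> KS \<rho>" and t: "t < rel x"
      then obtain i where i: "i \<in> I" "x = (i, \<rho> i, pu i, vu i)" by (auto simp: KS_def)
      have "t - c < rh i" using that i t by auto
      then show "T c (jid x) t = 0" using Shi[OF i(1)] i by (simp add: T_def)
    qed
  qed
  have workT: "work (T c) (i, \<rho>, pu i, vu i) t = pu i - (LBINT u=ereal (rh i)..ereal (t - c). Sh i u)"
    if "i \<in> I" "\<rho> \<le> rh i + c" for i \<rho> c t
  proof -
    have "work (T c) (i, \<rho>, pu i, vu i) t = pu i - (LBINT u=ereal \<rho>..ereal t. Sh i (u - c))"
      by (simp add: work_def T_def)
    also have "(LBINT u=ereal \<rho>..ereal t. Sh i (u - c)) = (LBINT u=ereal (\<rho> - c)..ereal (t - c). Sh i u)"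
      by (rule lbint_shift)
    also have "\<dots> = (LBINT u=ereal (rh i)..ereal (t - c). Sh i u)"
      by (rule lbint_zero_below) (use Shi[OF that(1)] that(2) in auto)
    finally show ?thesis .
  qed

  have betaKS: "\<beta> (KS \<rho>) * real (card I) \<le> \<beta> JU * real (card I)" if rho0: "\<forall>i\<in>I. 0 \<le> \<rho> i" for \<rho>
  proof (cases "I = {}")
    case True then show ?thesis by simp
  next
    case False
    have ne: "KS rh \<noteq> {}" using False by (simp add: KS_def)
    have vrh: "valid_jobs (KS rh)" by (rule KS_valid) (use pos in auto)
    have pe: "perturb \<rho> (\<lambda>_. 0) (KS rh) = KS \<rho>" by (simp add: perturb_def KS_def image_image)
    have "\<beta> (perturb \<rho> (\<lambda>_. 0) (KS rh)) \<le> (1 + Max ((\<lambda>x. 0::real) ` KS rh)) * \<beta> (KS rh)"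
    proof -
      have sm: "\<And>J r' \<eta>. valid_jobs J \<Longrightarrow> J \<noteq> {} \<Longrightarrow> (\<forall>x\<in>J. r' (jid x) \<ge> 0 \<and> \<eta> (jid x) \<ge> 0) \<Longrightarrow>
          \<beta> (perturb r' \<eta> J) \<le> (1 + Max ((\<lambda>x. \<eta> (jid x)) ` J)) * \<beta> J"
        using smooth unfolding smooth_fun_def by blast
      have "\<forall>x\<in>KS rh. \<rho> (jid x) \<ge> 0 \<and> (0::real) \<ge> 0" using rho0 by (auto simp: KS_def)
      from sm[OF vrh ne this] show ?thesis by simp
    qed
    moreover have "(\<lambda>x. 0::real) ` KS rh = {0}" using ne by auto
    ultimately have "\<beta> (KS \<rho>) \<le> \<beta> (KS rh)" using pe by simp
    also have "\<beta> (KS rh) \<le> \<beta> JU" using mono vJU KSrh_sub unfolding monotone_fun_def by blast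
    finally show ?thesis by (rule mult_right_mono) simp
  qed
  have step: "F (T cA) (KS \<rho>A) \<le> F (T cB) (KS \<rho>B) + \<beta> JU * real (card I) * \<delta>"
    if d0: "0 \<le> \<delta>" and d1: "\<delta> \<le> 1" and cAB: "cA = cB + \<delta>"
      and H: "\<forall>i\<in>I. 0 \<le> \<rho>A i \<and> \<rho>A i \<le> rh i + cA \<and> 0 \<le> \<rho>B i \<and> \<rho>B i \<le> rh i + cB \<and> \<rho>B i - \<delta> \<le> \<rho>A i"
    for \<delta> cA cB \<rho>A \<rho>B
  proof -
    define \<pi> where "\<pi> x = (jid x, \<rho>B (jid x), pu (jid x), vu (jid x))" for x :: "'i job"
    have bij: "bij_betw \<pi> (KS \<rho>A) (KS \<rho>B)"
      unfolding bij_betw_def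
    proof
      show "inj_on \<pi> (KS \<rho>A)" by (auto simp: KS_def \<pi>_def inj_on_def)
      show "\<pi> ` KS \<rho>A = KS \<rho>B" by (simp add: KS_def \<pi>_def image_image)
    qed
    have vA: "valid_jobs (KS \<rho>A)" and vB: "valid_jobs (KS \<rho>B)" using H by (auto intro!: KS_valid)
    have fA: "feasible \<alpha> (KS \<rho>A) (T cA)" and fB: "feasible \<alpha> (KS \<rho>B) (T cB)"
      using H by (auto intro!: feasT)
    have cond: "\<forall>x\<in>KS \<rho>A. proc x \<le> proc (\<pi> x) \<and> wt x \<le> wt (\<pi> x) \<and> rel x \<ge> rel (\<pi> x) - \<delta> \<and>
                  (\<forall>t. t \<ge> rel (\<pi> x) + \<delta> \<longrightarrow> work (T cA) x t \<le> work (T cB) (\<pi> x) (t - \<delta>))"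
    proof
      fix x assume "x \<in> KS \<rho>A"
      then obtain i where i: "i \<in> I" "x = (i, \<rho>A i, pu i, vu i)" by (auto simp: KS_def)
      have px: "\<pi> x = (i, \<rho>B i, pu i, vu i)" using i by (simp add: \<pi>_def)
      have "work (T cA) x t = work (T cB) (\<pi> x) (t - \<delta>)" for t
        using workT[OF i(1), of "\<rho>A i" cA t] workT[OF i(1), of "\<rho>B i" cB "t - \<delta>"] H i cAB px
        by (simp add: algebra_simps)
      then show "proc x \<le> proc (\<pi> x) \<and> wt x \<le> wt (\<pi> x) \<and> rel x \<ge> rel (\<pi> x) - \<delta> \<and>
                  (\<forall>t. t \<ge> rel (\<pi> x) + \<delta> \<longrightarrow> work (T cA) x t \<le> work (T cB) (\<pi> x) (t - \<delta>))"
        using i px H by simp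
    qed
    have "F (T cA) (KS \<rho>A) \<le> F (T cB) (KS \<rho>B) + \<beta> (KS \<rho>A) * real (card (KS \<rho>A)) * \<delta>"
      using bs[of 0 \<delta> "KS \<rho>A" "KS \<rho>B" \<pi>, OF _ _ d0 d1 vA vB bij] fA fB cond by auto
    moreover have "\<beta> (KS \<rho>A) * real (card (KS \<rho>A)) * \<delta> \<le> \<beta> JU * real (card I) * \<delta>"
      using betaKS[of \<rho>A] H d0 KS_card by (auto intro!: mult_right_mono)
    ultimately show ?thesis by linarith
  qed

  define n where "n = Suc (nat \<lceil>eb\<rceil>)"
  define \<delta> where "\<delta> = eb / real n"
  define \<rho>k where "\<rho>k k i = rh i + real k * (r i - rh i) / real n" for k i
  have npos: "real n > 0" by (simp add: n_def)
  have ebn: "eb \<le> real n"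
  proof -
    have "eb \<le> real_of_int \<lceil>eb\<rceil>" by simp
    also have "\<dots> = real (nat \<lceil>eb\<rceil>)" using eb0 by simp
    finally show ?thesis by (simp add: n_def)
  qed
  have d0: "0 \<le> \<delta>" using eb0 npos by (simp add: \<delta>_def)
  have d1: "\<delta> \<le> 1" using ebn npos by (simp add: \<delta>_def divide_le_eq)
  have diff: "\<bar>r i - rh i\<bar> \<le> eb" if "i \<in> I" for i using Iprop[OF that] by (simp add: r_def rh_def)
  have rho_props: "0 \<le> \<rho>k k i \<and> \<rho>k k i \<le> rh i + real k * \<delta>" if "i \<in> I" "k \<le> n" for i k
  proof -
    define \<theta> where "\<theta> = real k / real n"
    have th: "0 \<le> \<theta>" "\<theta> \<le> 1" using that npos by (auto simp: \<theta>_def divide_le_eq)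
    have e: "\<rho>k k i = (1 - \<theta>) * rh i + \<theta> * r i" using npos by (simp add: \<rho>k_def \<theta>_def field_simps)
    have "0 \<le> (1 - \<theta>) * rh i + \<theta> * r i" using th pos[OF that(1)] by simp
    moreover have "real k * (r i - rh i) / real n \<le> real k * eb / real n"
      using diff[OF that(1)] npos by (intro divide_right_mono mult_left_mono) auto
    ultimately show ?thesis using e by (simp add: \<rho>k_def \<delta>_def)
  qed
  have rho_step: "\<rho>k k i - \<delta> \<le> \<rho>k (Suc k) i" if "i \<in> I" for i k
  proof -
    have "- eb / real n \<le> (r i - rh i) / real n"
      using diff[OF that] npos by (intro divide_right_mono) auto
    moreover have "\<rho>k (Suc k) i = \<rho>k k i + (r i - rh i) / real n"
      using npos by (simp add: \<rho>k_def field_simps)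
    ultimately show ?thesis by (simp add: \<delta>_def)
  qed
  have chain: "F (T (real k * \<delta>)) (KS (\<rho>k k)) \<le> F (T 0) (KS (\<rho>k 0)) + real k * (\<beta> JU * real (card I) * \<delta>)"
    if "k \<le> n" for k
    using that
  proof (induction k)
    case 0 then show ?case by simp
  next
    case (Suc k)
    have "F (T (real (Suc k) * \<delta>)) (KS (\<rho>k (Suc k))) \<le> F (T (real k * \<delta>)) (KS (\<rho>k k)) + \<beta> JU * real (card I) * \<delta>"
    proof (rule step[OF d0 d1])
      show "real (Suc k) * \<delta> = real k * \<delta> + \<delta>" by (simp add: algebra_simps)
      show "\<forall>i\<in>I. 0 \<le> \<rho>k (Suc k) i \<and> \<rho>k (Suc k) i \<le> rh i + real (Suc k) * \<delta> \<and> 0 \<le> \<rho>k k i \<and>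
          \<rho>k k i \<le> rh i + real k * \<delta> \<and> \<rho>k k i - \<delta> \<le> \<rho>k (Suc k) i"
        using rho_props[of _ "Suc k"] rho_props[of _ k] rho_step Suc.prems by auto
    qed
    then show ?case using Suc by (simp add: algebra_simps)
  qed
  have T0: "T 0 = Sh" by (simp add: T_def)
  have rho0: "\<rho>k 0 = rh" by (simp add: \<rho>k_def fun_eq_iff)
  have rhon: "\<rho>k n = r" using npos by (simp add: \<rho>k_def fun_eq_iff)
  have ndelta: "real n * \<delta> = eb" using npos by (simp add: \<delta>_def)
  have chainF: "F (T eb) (KS r) \<le> F Sh (KS rh) + \<beta> JU * real (card I) * eb"
  proof -
    have c: "F (T (real n * \<delta>)) (KS (\<rho>k n)) \<le> F (T 0) (KS (\<rho>k 0)) + real n * (\<beta> JU * real (card I) * \<delta>)"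
      by (rule chain) simp
    have "real n * (\<beta> JU * real (card I) * \<delta>) = \<beta> JU * real (card I) * (real n * \<delta>)"
      by (simp add: ac_simps)
    with c show ?thesis unfolding T0 rho0 rhon ndelta by simp
  qed
  have FshU: "F Sh (KS rh) \<le> F Sh JU" using q4[OF vJU KSrh_sub feasU] .

  have r_Js: "r (jid x) = rel x" "jid x \<in> I" if "x \<in> Js" for x
    using tj[OF that] that by (simp_all add: r_def I_def)
  have Js_inj: "inj_on jid Js" using vJs by (simp add: valid_jobs_def)
  define \<pi>0 where "\<pi>0 x = (jid x, r (jid x), pu (jid x), vu (jid x))" for x :: "'i job"
  have bij0: "bij_betw \<pi>0 Js (KS r)"
    unfolding bij_betw_def
  proof
    show "inj_on \<pi>0 Js"
    proof (rule inj_onI)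
      fix x y assume "x \<in> Js" "y \<in> Js" "\<pi>0 x = \<pi>0 y"
      then show "x = y" using inj_onD[OF Js_inj] by (simp add: \<pi>0_def)
    qed
    show "\<pi>0 ` Js = KS r" by (simp add: KS_def I_def image_image \<pi>0_def)
  qed
  have measS: "\<forall>x\<in>Js. S (jid x) \<in> borel_measurable lborel"
    using Shi r_Js(2) by (auto simp: S_def intro: shift_meas_b(2))
  have bndS: "\<forall>x\<in>Js. \<forall>t. 0 \<le> S (jid x) t \<and> S (jid x) t \<le> Sh (jid x) (t - eb)"
    using Shi r_Js(2) by (auto simp: S_def)
  have idsJs: "jid ` Js \<subseteq> jid ` JU" using I_sub by (simp add: I_def)
  have feasS: "feasible \<alpha> Js S"
  proof (rule feasible_from[OF feasU vJU vJs idsJs a(1) measS bndS])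
    show "\<forall>x\<in>Js. \<forall>t. t < rel x \<longrightarrow> S (jid x) t = 0"
    proof (intro ballI allI impI)
      fix x t assume x: "x \<in> Js" and t: "t < rel x"
      have "\<bar>r (jid x) - rh (jid x)\<bar> \<le> eb" using diff r_Js(2)[OF x] by blast
      then have "t - eb < rh (jid x)" using t r_Js(1)[OF x] by auto
      then show "S (jid x) t = 0" using Shi[OF r_Js(2)[OF x]] by (simp add: S_def)
    qed
  qed
  have feasTr: "feasible \<alpha> (KS r) (T eb)"
  proof (rule feasT)
    show "\<forall>i\<in>I. 0 \<le> r i \<and> r i \<le> rh i + eb"
    proof
      fix i assume "i \<in> I"
      then show "0 \<le> r i \<and> r i \<le> rh i + eb" using pos[of i] diff[of i] by (auto simp: abs_le_iff)
    qed
  qed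
  have vKSr: "valid_jobs (KS r)" by (rule KS_valid) (use pos in auto)
  have condF: "\<forall>x\<in>Js. proc x \<le> proc (\<pi>0 x) \<and> wt x \<le> wt (\<pi>0 x) \<and> rel x \<ge> rel (\<pi>0 x) - 0 \<and>
                  (\<forall>t. t \<ge> rel (\<pi>0 x) + 0 \<longrightarrow> work S x t \<le> work (T eb) (\<pi>0 x) (t - 0))"
  proof
    fix x assume x: "x \<in> Js"
    define i where "i = jid x"
    have iI: "i \<in> I" and tji: "tj i = x" using r_Js(2)[OF x] tj[OF x] by (simp_all add: i_def)
    note P = Iprop[OF iI]
    have pr: "proc x \<le> pu i" using P tji by (auto simp: pu_def algebra_simps abs_le_iff)
    have wr: "wt x \<le> vu i" using P tji by (auto simp: vu_def algebra_simps abs_le_iff)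
    have px: "\<pi>0 x = (i, rel x, pu i, vu i)" using r_Js(1)[OF x] by (simp add: \<pi>0_def i_def)
    have rx: "rel x \<ge> tlam" using Js_prop[OF x] by blast
    have wk: "work S x t \<le> work (T eb) (\<pi>0 x) t" if t: "t \<ge> rel x" for t
    proof -
      have "(LBINT u=ereal (rel x)..ereal t. S i u) = (LBINT u=ereal (rel x)..ereal t. Sh i (u - eb))"
      proof (rule interval_integral_cong)
        fix u assume "u \<in> einterval (min (ereal (rel x)) (ereal t)) (max (ereal (rel x)) (ereal t))"
        then have "u > rel x" using t by (auto simp: einterval_iff min_def max_def)
        then show "S i u = Sh i (u - eb)" using rx by (simp add: S_def)
      qed
      then show ?thesis using pr px by (simp add: work_def T_def i_def)
    qed
    show "proc x \<le> proc (\<pi>0 x) \<and> wt x \<le> wt (\<pi>0 x) \<and> rel x \<ge> rel (\<pi>0 x) - 0 \<and>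
                  (\<forall>t. t \<ge> rel (\<pi>0 x) + 0 \<longrightarrow> work S x t \<le> work (T eb) (\<pi>0 x) (t - 0))"
      using pr wr px wk by simp
  qed
  have FS: "F S Js \<le> F (T eb) (KS r)"
  proof -
    have "F S Js \<le> F (T eb) (KS r) + \<beta> Js * real (card Js) * 0"
      using bs[of 0 0 Js "KS r" \<pi>0, OF _ _ _ _ vJs vKSr bij0] feasS feasTr condF by auto
    then show ?thesis by simp
  qed
  have ES: "energy \<alpha> S Js \<le> energy \<alpha> Sh JU"
    by (rule energy_bound(2)[OF feasU vJU vJs idsJs a(1) measS bndS])
  have costS: "cost \<alpha> F S Js \<le> OPT \<alpha> F JU + \<beta> JU * real (card I) * eb"
    using ES FS chainF FshU costU by (simp add: cost_def)

  have sm: "\<And>K r' \<eta>. valid_jobs K \<Longrightarrow> K \<noteq> {} \<Longrightarrow> (\<forall>x\<in>K. r' (jid x) \<ge> 0 \<and> \<eta> (jid x) \<ge> 0) \<Longrightarrow>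
      \<beta> (perturb r' \<eta> K) \<le> (1 + Max ((\<lambda>x. \<eta> (jid x)) ` K)) * \<beta> K"
    using smooth unfolding smooth_fun_def by blast
  define rr where "rr i = rel (hj i)" for i
  have pJU: "perturb rr (\<lambda>_. eta) Jh = JU"
    unfolding perturb_def JU_eq up_def by (rule image_cong) (simp_all add: rr_def hj)
  have "\<forall>x\<in>Jh. rr (jid x) \<ge> 0 \<and> eta \<ge> 0" using vJh(3) eta0 by (simp add: rr_def hj)
  from sm[OF a(5) a(6) this] pJU have "\<beta> JU \<le> (1 + Max ((\<lambda>x. eta) ` Jh)) * \<beta> Jh" by simp
  moreover have "(\<lambda>x. eta) ` Jh = {eta}" using a(6) by auto
  ultimately have bJU: "\<beta> JU \<le> (1 + eta) * \<beta> Jh" by simp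
  define dn where "dn x = (jid x, rel x, proc x / (1 + eta), wt x / (1 + eta))" for x :: "'i job"
  have dnup: "dn (up y) = y" for y
    using eta0 by (simp add: dn_def up_def jid_def rel_def proc_def wt_def prod_eq_iff)
  have bijdn: "bij_betw dn JU Jh"
    unfolding bij_betw_def JU_eq
  proof
    show "inj_on dn (up ` Jh)"
    proof (rule inj_onI)
      fix x y assume "x \<in> up ` Jh" "y \<in> up ` Jh" "dn x = dn y"
      then show "x = y" using dnup by auto
    qed
    show "dn ` up ` Jh = Jh" by (simp add: image_image dnup)
  qed
  have condO: "\<forall>x\<in>JU. \<bar>rel x - rel (dn x)\<bar> \<le> 0 \<and> proc x \<le> proc (dn x) * (1 + eta) \<and>
                  wt x \<le> wt (dn x) * (1 + eta)"
  proof
    fix x assume "x \<in> JU"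
    then obtain y where "x = up y" using JU_eq by blast
    then show "\<bar>rel x - rel (dn x)\<bar> \<le> 0 \<and> proc x \<le> proc (dn x) * (1 + eta) \<and> wt x \<le> wt (dn x) * (1 + eta)"
      using dnup by (simp add: up_def)
  qed
  have "OPT \<alpha> F JU \<le> (1 + \<beta> JU * eta) * OPT \<alpha> F Jh + \<beta> JU * real (card JU) * 0"
    using bs[of eta 0 JU Jh dn, OF eta0 _ _ _ vJU a(5) bijdn] eta1 condO by auto
  then have OJU: "OPT \<alpha> F JU \<le> (1 + \<beta> JU * eta) * OPT \<alpha> F Jh" by simp
  have cI: "card I \<le> card Jh"
  proof -
    have "I \<subseteq> jid ` Jh" using Iprop by force
    then have "card I \<le> card (jid ` Jh)" using vJh(1) by (intro card_mono) auto
    also have "\<dots> \<le> card Jh" by (rule card_image_le[OF vJh(1)])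
    finally show ?thesis .
  qed
  have BJU1: "\<beta> JU \<ge> 1" using bge1 vJU by blast
  have etaB: "eta * \<beta> Jh = \<eta>s" using BJh by (simp add: eta_def)
  have X1: "\<beta> JU * eta \<le> (1 + eta) * \<eta>s"
  proof -
    have "\<beta> JU * eta \<le> (1 + eta) * \<beta> Jh * eta" using bJU eta0 by (rule mult_right_mono)
    also have "\<dots> = (1 + eta) * \<eta>s" using etaB by (simp add: algebra_simps)
    finally show ?thesis .
  qed
  define Oh where "Oh = OPT \<alpha> F Jh"
  have Oh0: "Oh > 0" using a(7) by (simp add: Oh_def)
  have X2: "\<beta> JU * real (card I) * eb \<le> (1 + eta) * \<eta>s * Oh"
  proof -
    have "\<beta> JU * real (card I) * eb \<le> \<beta> JU * real (card Jh) * eb"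
      using cI BJU1 eb0 by (intro mult_right_mono mult_left_mono) auto
    also have "\<dots> = \<beta> JU * eta * Oh" using cJh by (simp add: eb_eq Oh_def)
    also have "\<dots> \<le> (1 + eta) * \<eta>s * Oh" using X1 Oh0 by (intro mult_right_mono) auto
    finally show ?thesis .
  qed
  have X3: "(1 + \<beta> JU * eta) * Oh \<le> (1 + (1 + eta) * \<eta>s) * Oh"
    using X1 Oh0 by (intro mult_right_mono) auto
  have X4: "(1 + eta) * \<eta>s \<le> (1 + \<eta>s) * \<eta>s" using etas a(8) by (intro mult_right_mono) auto
  have "cost \<alpha> F S Js \<le> (1 + (1 + eta) * \<eta>s) * Oh + (1 + eta) * \<eta>s * Oh"
    using costS OJU X2 X3 unfolding Oh_def by linarith
  also have "\<dots> = (1 + 2 * ((1 + eta) * \<eta>s)) * Oh" by (simp add: algebra_simps)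
  also have "\<dots> \<le> (1 + 2 * ((1 + \<eta>s) * \<eta>s)) * Oh" using X4 Oh0 by (intro mult_right_mono) auto
  finally have "cost \<alpha> F S Js \<le> (1 + 2 * \<eta>s * (1 + \<eta>s)) * OPT \<alpha> F Jh"
    by (simp add: Oh_def algebra_simps)
  then show ?thesis unfolding S_def Js_def eb_def .
qed
end
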